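(* Let $b\ge1$, $1\le a\le b$ and $\mu\ge1$ be integers, and $s=\tfrac{2a-1}{2}$. The smallest spin $j$ that supports a $(\mathsf{BD}_{2b},\delta_a)$-covariant spin code with $\mu$ degrees of freedom (i.e. for which the irrep $\delta_a$ occurs with multiplicity $\mu$ in the restriction of the spin-$j$ representation to $\mathsf{BD}_{2b}$) is $j=\mu b+\kappa$, where $\kappa=s-b$ if $\mu$ is odd and $\kappa=-s$ if $\mu$ is even.
   Context: Spin $j$ denotes the $(2j+1)$-dimensional irrep $D^j$ of $\mathrm{SU}(2)$. With $\mathsf{X}=\begin{pmatrix}0&-i\\-i&0\end{pmatrix}$, $\mathsf{Z}=\mathrm{diag}(-i,i)$, $\mathsf{Ph}(\alpha)=\mathrm{diag}(e^{-i\alpha/2},e^{i\alpha/2})$, the binary dihedral group is $\mathsf{BD}_{2b}=\langle\mathsf{X},\mathsf{Z},\mathsf{Ph}(\pi/b)\rangle$. For $1\le a\le b$, $\delta_a$ is the two-dimensional irreducible representation of $\mathsf{BD}_{2b}$ with $\delta_a(\mathsf{X})=\mathsf{X}$ and $\delta_a(\mathsf{Ph}(\pi/b))=\mathsf{Ph}(\pi/b)^{2a-1}$. A spin code with encoding isometry $V$ into spin $j$ is $(\mathsf{BD}_{2b},\delta_a)$-covariant if $D^j(g)V=V\delta_a(g)$ for all $g$; the number of degrees of freedom in choosing such a code is the multiplicity of $\delta_a$ in spin $j$. *)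

theory Defs
  imports "HOL-Analysis.Analysis" "HOL-Library.Function_Algebras"
begin

type_synonym m2 = "complex^2^2"

definition mk2 :: "complex \<Rightarrow> complex \<Rightarrow> complex \<Rightarrow> complex \<Rightarrow> m2" where
  "mk2 p q r t = (\<chi> i k. if i = 0 then (if k = 0 then p else q) else (if k = 0 then r else t))"

definition gX :: m2 where "gX = mk2 0 (-\<i>) (-\<i>) 0"
definition gZ :: m2 where "gZ = mk2 (-\<i>) 0 0 \<i>"
definition Ph :: "real \<Rightarrow> m2" where
  "Ph \<alpha> = mk2 (exp (- \<i> * of_real \<alpha> / 2)) 0 0 (exp (\<i> * of_real \<alpha> / 2))"

text \<open>The graph {(g, delta_a g) | g in BD_2b} of the representation delta_a, generated
  (as a monoid, which suffices since the group is finite) by the images of the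
  generators X, Z, Ph(pi/b). Note Z = Ph(pi/b)^b, so delta_a(Z) = Ph(pi/b)^(b(2a-1)) = Ph((2a-1)pi);
  likewise Ph(pi/b)^(2a-1) = Ph((2a-1)pi/b).\<close>
inductive_set BD_graph :: "nat \<Rightarrow> nat \<Rightarrow> (m2 \<times> m2) set" for b a :: nat where
  genX: "(gX, gX) \<in> BD_graph b a"
| genZ: "(gZ, Ph ((2 * real a - 1) * pi)) \<in> BD_graph b a"
| genP: "(Ph (pi / real b), Ph ((2 * real a - 1) * pi / real b)) \<in> BD_graph b a"
| mult: "(g1, h1) \<in> BD_graph b a \<Longrightarrow> (g2, h2) \<in> BD_graph b a \<Longrightarrow> (g1 ** g2, h1 ** h2) \<in> BD_graph b a"

text \<open>Spin j = n/2 representation D^j, realized on homogeneous polynomials of degree n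
  in x, y (basis x^k y^(n-k), k = 0..n), i.e. Sym^n of the defining representation.\<close>
definition Dspin :: "nat \<Rightarrow> m2 \<Rightarrow> nat \<Rightarrow> nat \<Rightarrow> complex" where
  "Dspin n g l k =
     (let \<alpha> = g $ 0 $ 0; \<beta> = g $ 0 $ 1; \<gamma> = g $ 1 $ 0; \<delta> = g $ 1 $ 1 in
      (\<Sum>p\<le>k. \<Sum>q\<le>n - k. if p + q = l then
          of_nat (k choose p) * \<alpha> ^ p * \<gamma> ^ (k - p) *
          of_nat ((n - k) choose q) * \<beta> ^ q * \<delta> ^ (n - k - q) else 0))"

definition covariant_maps :: "nat \<Rightarrow> nat \<Rightarrow> nat \<Rightarrow> (nat \<Rightarrow> 2 \<Rightarrow> complex) set" where
  "covariant_maps b a n = {V. (\<forall>i k. n < i \<longrightarrow> V i k = 0) \<and>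
     (\<forall>(g, h) \<in> BD_graph b a. \<forall>i\<le>n. \<forall>k.
        (\<Sum>l\<le>n. Dspin n g i l * V l k) = (\<Sum>m\<in>UNIV. V i m * h $ m $ k))}"

definition fscale :: "complex \<Rightarrow> (nat \<Rightarrow> 2 \<Rightarrow> complex) \<Rightarrow> (nat \<Rightarrow> 2 \<Rightarrow> complex)" where
  "fscale c V = (\<lambda>i k. c * V i k)"

text \<open>Multiplicity of delta_a in spin n/2 = complex dimension of the intertwiner space.\<close>
definition multiplicity :: "nat \<Rightarrow> nat \<Rightarrow> nat \<Rightarrow> nat" where
  "multiplicity b a n = vector_space.dim fscale (covariant_maps b a n)"

end

theory Submission
  imports Defs
begin


lemma two_cases: "(k::2) = 0 \<or> k = 1"
  proof - have "(2::2) = 0" by simp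
  then show ?thesis using exhaust_2[of k] by metis qed
lemma UNIV_2': "(UNIV::2 set) = {0,1}" using two_cases by auto
lemma sum2: "sum f (UNIV::2 set) = f 0 + f 1" unfolding UNIV_2' by simp
lemma all2: "(\<forall>k::2. P k) \<longleftrightarrow> P 0 \<and> P 1" using two_cases by metis

lemma mk2_nth[simp]: "mk2 p q r t $ 0 $ 0 = p" "mk2 p q r t $ 0 $ 1 = q"
  "mk2 p q r t $ 1 $ 0 = r" "mk2 p q r t $ 1 $ 1 = t"
  by (simp_all add: mk2_def)

lemma mk2_mult: "mk2 p q r t ** mk2 p' q' r' t' = mk2 (p*p'+q*r') (p*q'+q*t') (r*p'+t*r') (r*q'+t*t')"
  unfolding matrix_matrix_mult_def
  by (simp add: vec_eq_iff all2 sum2)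

lemma mk2_eq: "mk2 p q r t = mk2 p' q' r' t' \<longleftrightarrow> p = p' \<and> q = q' \<and> r = r' \<and> t = t'"
  by (metis mk2_nth)
lemma Ph_mk: "Ph x = mk2 (exp (- \<i> * of_real x / 2)) 0 0 (exp (\<i> * of_real x / 2))"
  by (simp add: Ph_def)

lemma Ph_mult: "Ph x ** Ph y = Ph (x + y)"
proof -
  have "exp (- \<i> * of_real x / 2) * exp (- \<i> * of_real y / 2) = exp (- \<i> * of_real (x+y) / 2)"
    by (simp add: exp_add[symmetric] field_simps)
  moreover have "exp (\<i> * of_real x / 2) * exp (\<i> * of_real y / 2) = exp (\<i> * of_real (x+y) / 2)"
    by (simp add: exp_add[symmetric] field_simps)
  ultimately show ?thesis unfolding Ph_mk mk2_mult by (simp add: mk2_eq)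
qed

lemma gX_Ph: "gX ** Ph x = Ph (- x) ** gX"
  unfolding Ph_mk gX_def mk2_mult by (simp add: mk2_eq)

lemma exp_ipi: "exp (\<i> * of_real pi) = -1" "exp (- (\<i> * of_real pi)) = -1"
  by (simp_all add: exp_minus)

lemma gX_gX: "gX ** gX = Ph (2*pi)"
  unfolding Ph_mk gX_def mk2_mult by (simp add: mk2_eq exp_ipi)

lemma exp_shift: "w = z + of_real (2 * of_int n * pi) * \<i> \<Longrightarrow> exp w = exp z"
  unfolding exp_eq by (rule exI[of _ n]) simp

lemma Ph_odd: "Ph ((2 * real a - 1) * 2 * pi) = Ph (2*pi)" if "a \<ge> 1"
proof -
  have 1: "exp (\<i> * of_real ((2 * real a - 1) * 2 * pi) / 2) = exp (\<i> * of_real (2*pi) / 2)"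
    by (rule exp_shift[of _ _ "int a - 1"]) (simp add: field_simps)
  have 2: "exp (- \<i> * of_real ((2 * real a - 1) * 2 * pi) / 2) = exp (- \<i> * of_real (2*pi) / 2)"
    by (rule exp_shift[of _ _ "1 - int a"]) (simp add: field_simps)
  show ?thesis unfolding Ph_mk using 1 2 by simp
qed

lemma Ph0: "Ph 0 = mat 1"
  using two_cases by (auto simp add: Ph_mk mk2_def mat_def vec_eq_iff)

lemma gZ_Ph: "gZ = Ph pi"
proof -
  have "exp (\<i> * of_real pi / 2) = \<i>"
    by (simp add: exp_eq_polar cis_conv_exp[symmetric] cis.ctr complex_eq_iff)
  moreover have "exp (- \<i> * of_real pi / 2) = - \<i>"
    by (simp add: exp_eq_polar cis_conv_exp[symmetric] cis.ctr complex_eq_iff)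
  ultimately show ?thesis by (simp add: Ph_mk gZ_def)
qed

definition Gs :: "nat \<Rightarrow> nat \<Rightarrow> (m2 \<times> m2) set" where
  "Gs b a = {(Ph (of_int k * pi / real b), Ph (of_int k * (2*real a - 1) * pi / real b)) | k. True}
    \<union> {(Ph (of_int k * pi / real b) ** gX, Ph (of_int k * (2*real a - 1) * pi / real b) ** gX) | k. True}"

lemma Ph_mult_int: "Ph (of_int k1 * c) ** Ph (of_int k2 * c) = Ph (of_int (k1 + k2) * c)"
  by (simp add: Ph_mult ring_distribs)

lemma Ph_mult_int': "Ph (of_int k1 * c / d) ** Ph (of_int k2 * c / d) = Ph (of_int (k1 + k2) * c / d)"
  using Ph_mult_int[of k1 "c/d" k2] by simp

lemma Ph_mult_int'': "Ph (of_int k1 * c * e / d) ** Ph (of_int k2 * c * e / d) = Ph (of_int (k1 + k2) * c * e / d)"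
  using Ph_mult_int[of k1 "c * e/d" k2] by (simp add: mult.assoc)

lemma gX_Ph_int: "gX ** Ph (of_int k * c) = Ph (of_int (-k) * c) ** gX"
  by (simp add: gX_Ph)

lemma BD_sub_Gs:
  assumes b: "b \<ge> 1" and a: "a \<ge> 1" and x: "(g, h) \<in> BD_graph b a"
  shows "(g, h) \<in> Gs b a"
  using x
proof (induction rule: BD_graph.induct)
  case genX
  have "(Ph (of_int 0 * pi / real b) ** gX, Ph (of_int 0 * (2*real a - 1) * pi / real b) ** gX) = (gX, gX)"
    by (simp add: Ph0)
  then show ?case unfolding Gs_def by (intro UnI2 CollectI exI[of _ 0]) simp
next
  case genZ
  have "(Ph (of_int (int b) * pi / real b), Ph (of_int (int b) * (2*real a - 1) * pi / real b)) = (gZ, Ph ((2 * real a - 1) * pi))"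
    using b by (simp add: gZ_Ph)
  then show ?case unfolding Gs_def by (intro UnI1 CollectI exI[of _ "int b"]) simp
next
  case genP
  have "(Ph (of_int 1 * pi / real b), Ph (of_int 1 * (2*real a - 1) * pi / real b)) = (Ph (pi / real b), Ph ((2 * real a - 1) * pi / real b))"
    by simp
  then show ?case unfolding Gs_def by (intro UnI1 CollectI exI[of _ 1]) simp
next
  case (mult g1 h1 g2 h2)
  let ?P = "\<lambda>k::int. Ph (of_int k * pi / real b)"
  let ?Q = "\<lambda>k::int. Ph (of_int k * (2*real a - 1) * pi / real b)"
  have XP: "gX ** ?P k = ?P (-k) ** gX" for k
    using gX_Ph[of "of_int k * pi / real b"] by simp
  have XQ: "gX ** ?Q k = ?Q (-k) ** gX" for k
    using gX_Ph[of "of_int k * (2*real a - 1) * pi / real b"] by simp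
  have XXP: "gX ** gX = ?P (2 * int b)" using b by (simp add: gX_gX)
  have XXQ: "gX ** gX = ?Q (2 * int b)" using b Ph_odd[OF a] by (simp add: gX_gX mult.commute mult.left_commute)
  have PP: "?P k1 ** ?P k2 = ?P (k1 + k2)" for k1 k2 by (rule Ph_mult_int')
  have QQ: "?Q k1 ** ?Q k2 = ?Q (k1 + k2)" for k1 k2 by (rule Ph_mult_int'')
  from mult.IH obtain k1 where 1: "(g1, h1) = (?P k1, ?Q k1) \<or> (g1, h1) = (?P k1 ** gX, ?Q k1 ** gX)"
    unfolding Gs_def by blast
  from mult.IH obtain k2 where 2: "(g2, h2) = (?P k2, ?Q k2) \<or> (g2, h2) = (?P k2 ** gX, ?Q k2 ** gX)"
    unfolding Gs_def by blast
  from 1 2 have "(g1 ** g2, h1 ** h2) = (?P (k1+k2), ?Q (k1+k2))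
     \<or> (g1 ** g2, h1 ** h2) = (?P (k1+k2) ** gX, ?Q (k1+k2) ** gX)
     \<or> (g1 ** g2, h1 ** h2) = (?P (k1-k2) ** gX, ?Q (k1-k2) ** gX)
     \<or> (g1 ** g2, h1 ** h2) = (?P (k1-k2 + 2 * int b), ?Q (k1-k2 + 2 * int b))"
  proof (elim disjE)
    assume "(g1, h1) = (?P k1, ?Q k1)" "(g2, h2) = (?P k2, ?Q k2)"
    then show ?thesis using PP QQ by simp
  next
    assume "(g1, h1) = (?P k1, ?Q k1)" "(g2, h2) = (?P k2 ** gX, ?Q k2 ** gX)"
    then show ?thesis using PP QQ by (simp add: matrix_mul_assoc)
  next
    assume "(g1, h1) = (?P k1 ** gX, ?Q k1 ** gX)" "(g2, h2) = (?P k2, ?Q k2)"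
    then have "g1 ** g2 = ?P k1 ** (gX ** ?P k2)" "h1 ** h2 = ?Q k1 ** (gX ** ?Q k2)"
      by (simp_all add: matrix_mul_assoc)
    then have "g1 ** g2 = (?P k1 ** ?P (-k2)) ** gX" "h1 ** h2 = (?Q k1 ** ?Q (-k2)) ** gX"
      unfolding XP XQ by (simp_all only: matrix_mul_assoc)
    then have "g1 ** g2 = ?P (k1 + - k2) ** gX" "h1 ** h2 = ?Q (k1 + - k2) ** gX"
      unfolding PP QQ by simp_all
    then show ?thesis by simp
  next
    assume "(g1, h1) = (?P k1 ** gX, ?Q k1 ** gX)" "(g2, h2) = (?P k2 ** gX, ?Q k2 ** gX)"
    then have "g1 ** g2 = ?P k1 ** (gX ** ?P k2) ** gX" "h1 ** h2 = ?Q k1 ** (gX ** ?Q k2) ** gX"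
      by (simp_all add: matrix_mul_assoc)
    note e = this
    have "?P k1 ** (gX ** ?P k2) ** gX = (?P k1 ** ?P (-k2)) ** (gX ** gX)"
      by (simp only: XP matrix_mul_assoc)
    also have "\<dots> = ?P (k1 + -k2) ** ?P (2 * int b)" by (simp only: PP XXP)
    also have "\<dots> = ?P (k1 + -k2 + 2 * int b)" by (rule PP)
    finally have g: "g1 ** g2 = ?P (k1 + -k2 + 2 * int b)" using e by simp
    have "?Q k1 ** (gX ** ?Q k2) ** gX = (?Q k1 ** ?Q (-k2)) ** (gX ** gX)"
      by (simp only: XQ matrix_mul_assoc)
    also have "\<dots> = ?Q (k1 + -k2) ** ?Q (2 * int b)" by (simp only: QQ XXQ)
    also have "\<dots> = ?Q (k1 + -k2 + 2 * int b)" by (rule QQ)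
    finally have h: "h1 ** h2 = ?Q (k1 + -k2 + 2 * int b)" using e by simp
    from g h have "g1 ** g2 = ?P (k1 - k2 + 2 * int b)" "h1 ** h2 = ?Q (k1 - k2 + 2 * int b)"
      by simp_all
    then show ?thesis by simp
  qed
  then show ?case unfolding Gs_def
    by (elim disjE) (intro UnI1 UnI2 CollectI exI conjI TrueI; assumption)+
qed



lemma sum_delta_le: "(\<Sum>p\<le>(N::nat). if p = x then f p else 0) = (if x \<le> N then f x else 0)"
  by (simp add: sum.delta' atMost_iff)

lemma Dspin_diag:
  assumes "k \<le> n"
  shows "Dspin n (mk2 \<alpha> 0 0 \<delta>) l k = (if l = k then \<alpha>^k * \<delta>^(n-k) else 0)"
proof -
  have "Dspin n (mk2 \<alpha> 0 0 \<delta>) l k = (\<Sum>p\<le>k. \<Sum>q\<le>n - k. if q = 0 then (if p = k then (if l = k then \<alpha>^k * \<delta>^(n-k) else 0) else 0) else 0)"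
    unfolding Dspin_def Let_def
    by (intro sum.cong refl) (auto simp: mk2_def power_0_left)
  also have "\<dots> = (if l = k then \<alpha>^k * \<delta>^(n-k) else 0)"
    by (simp add: sum_delta_le)
  finally show ?thesis .
qed

lemma Dspin_anti:
  assumes "k \<le> n"
  shows "Dspin n (mk2 0 \<beta> \<gamma> 0) l k = (if l = n - k then \<gamma>^k * \<beta>^(n-k) else 0)"
proof -
  have "Dspin n (mk2 0 \<beta> \<gamma> 0) l k = (\<Sum>p\<le>k. \<Sum>q\<le>n - k. if q = n - k then (if p = 0 then (if l = n - k then \<gamma>^k * \<beta>^(n-k) else 0) else 0) else 0)"
    unfolding Dspin_def Let_def
    by (intro sum.cong refl) (auto simp: mk2_def power_0_left)
  also have "\<dots> = (if l = n - k then \<gamma>^k * \<beta>^(n-k) else 0)"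
    by (simp add: sum_delta_le)
  finally show ?thesis .
qed


lemma exp_pow_combine:
  assumes "i \<le> n"
  shows "exp (- \<i> * of_real x / 2) ^ i * exp (\<i> * of_real x / 2) ^ (n - i)
       = exp (\<i> * of_real x * of_int (int n - 2 * int i) / 2)"
proof -
  have "exp (- \<i> * of_real x / 2) ^ i * exp (\<i> * of_real x / 2) ^ (n - i)
      = exp (of_nat i * (- \<i> * of_real x / 2) + of_nat (n - i) * (\<i> * of_real x / 2))"
    by (simp only: exp_add exp_of_nat_mult)
  also have "of_nat i * (- \<i> * of_real x / 2) + of_nat (n - i) * (\<i> * of_real x / 2)
      = \<i> * of_real x * of_int (int n - 2 * int i) / 2"
    using assms by (simp add: of_nat_diff field_simps)
  finally show ?thesis .
qed

lemma expo0:
  assumes b: "b > 0" and N: "N = 4 * int b * q - (2 * int a - 1)"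
  shows "exp (\<i> * of_real (of_int k * pi / real b) * of_int N / 2)
       = exp (- \<i> * of_real (of_int k * (2 * real a - 1) * pi / real b) / 2)"
proof (rule exp_shift[of _ _ "k * q"])
  have "(of_int N :: complex) = 4 * of_nat b * of_int q - (2 * of_nat a - 1)"
    using N by simp
  then show "\<i> * of_real (of_int k * pi / real b) * of_int N / 2 =
    - \<i> * of_real (of_int k * (2 * real a - 1) * pi / real b) / 2 + of_real (2 * of_int (k * q) * pi) * \<i>"
    using b by (subst \<open>of_int N = _\<close>) (simp add: field_simps)
qed

lemma expo1:
  assumes b: "b > 0" and N: "N = (2 * int a - 1) - 4 * int b * q"
  shows "exp (\<i> * of_real (of_int k * pi / real b) * of_int N / 2)
       = exp (\<i> * of_real (of_int k * (2 * real a - 1) * pi / real b) / 2)"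
proof (rule exp_shift[of _ _ "- k * q"])
  have "(of_int N :: complex) = (2 * of_nat a - 1) - 4 * of_nat b * of_int q"
    using N by simp
  then show "\<i> * of_real (of_int k * pi / real b) * of_int N / 2 =
    \<i> * of_real (of_int k * (2 * real a - 1) * pi / real b) / 2 + of_real (2 * of_int (- k * q) * pi) * \<i>"
    using b by (subst \<open>of_int N = _\<close>) (simp add: field_simps)
qed

lemma expo_inv:
  assumes b: "b > 0"
    and e: "exp (\<i> * of_real (pi / real b) * of_int N / 2) = exp (- \<i> * of_real ((2 * real a - 1) * pi / real b) / 2)"
  shows "\<exists>q. N = 4 * int b * q - (2 * int a - 1)"
proof -
  from e obtain m :: int where m: "\<i> * of_real (pi / real b) * of_int N / 2 =
     - \<i> * of_real ((2 * real a - 1) * pi / real b) / 2 + of_real (of_int (2 * m) * pi) * \<i>"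
    unfolding exp_eq by blast
  then have "Im (\<i> * of_real (pi / real b) * of_int N / 2) =
     Im (- \<i> * of_real ((2 * real a - 1) * pi / real b) / 2 + of_real (of_int (2 * m) * pi) * \<i>)"
    by simp
  then have "pi / real b * of_int N / 2 = - ((2 * real a - 1) * pi / real b) / 2 + of_int (2 * m) * pi"
    by simp
  then have "pi * of_int N = pi * (- (2 * real a - 1) + 4 * real b * of_int m)"
    using b by (simp add: field_simps)
  then have "real_of_int N = - (2 * real a - 1) + 4 * real b * of_int m"
    by simp
  then have "real_of_int N = real_of_int (4 * int b * m - (2 * int a - 1))"
    by simp
  then have "N = 4 * int b * m - (2 * int a - 1)"
    by (simp only: of_int_eq_iff)
  then show ?thesis by blast
qed


definition goodi :: "nat \<Rightarrow> nat \<Rightarrow> nat \<Rightarrow> nat \<Rightarrow> bool" where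
  "goodi b a n i \<longleftrightarrow> (\<exists>q::int. int n - 2 * int i = 4 * int b * q - (2 * int a - 1))"

definition cX :: "nat \<Rightarrow> complex" where "cX n = \<i> * (- \<i>) ^ n"

definition Sset :: "nat \<Rightarrow> nat \<Rightarrow> nat \<Rightarrow> (nat \<Rightarrow> 2 \<Rightarrow> complex) set" where
  "Sset b a n = {V. (\<forall>i k. n < i \<longrightarrow> V i k = 0) \<and> (\<forall>i\<le>n. V i 0 \<noteq> 0 \<longrightarrow> goodi b a n i)
      \<and> (\<forall>i\<le>n. V i 1 = cX n * V (n - i) 0)}"

definition cov :: "nat \<Rightarrow> m2 \<Rightarrow> m2 \<Rightarrow> (nat \<Rightarrow> 2 \<Rightarrow> complex) \<Rightarrow> bool" where
  "cov n g h V \<longleftrightarrow> (\<forall>i\<le>n. \<forall>k. (\<Sum>l\<le>n. Dspin n g i l * V l k) = (\<Sum>m\<in>UNIV. V i m * h $ m $ k))"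

lemma covariant_maps_alt: "covariant_maps b a n = {V. (\<forall>i k. n < i \<longrightarrow> V i k = 0) \<and> (\<forall>(g, h) \<in> BD_graph b a. cov n g h V)}"
  unfolding covariant_maps_def cov_def by simp

lemma sum_diag:
  assumes "i \<le> n"
  shows "(\<Sum>l\<le>n. Dspin n (mk2 \<alpha> 0 0 \<delta>) i l * V l k) = \<alpha>^i * \<delta>^(n-i) * V i k"
proof -
  have "(\<Sum>l\<le>n. Dspin n (mk2 \<alpha> 0 0 \<delta>) i l * V l k) = (\<Sum>l\<le>n. if l = i then \<alpha>^i * \<delta>^(n-i) * V i k else 0)"
    by (intro sum.cong refl) (auto simp: Dspin_diag)
  also have "\<dots> = \<alpha>^i * \<delta>^(n-i) * V i k" using assms by (simp add: sum_delta_le)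
  finally show ?thesis .
qed

lemma sum_anti:
  assumes "i \<le> n"
  shows "(\<Sum>l\<le>n. Dspin n (mk2 0 \<beta> \<gamma> 0) i l * V l k) = \<gamma>^(n-i) * \<beta>^i * V (n-i) k"
proof -
  have "(\<Sum>l\<le>n. Dspin n (mk2 0 \<beta> \<gamma> 0) i l * V l k) = (\<Sum>l\<le>n. if l = n - i then \<gamma>^(n-i) * \<beta>^i * V (n-i) k else 0)"
    using assms by (intro sum.cong refl) (auto simp: Dspin_anti)
  also have "\<dots> = \<gamma>^(n-i) * \<beta>^i * V (n-i) k" using assms by (simp add: sum_delta_le)
  finally show ?thesis .
qed

lemma Ph_gX: "Ph x ** gX = mk2 0 (- \<i> * exp (- \<i> * of_real x / 2)) (- \<i> * exp (\<i> * of_real x / 2)) 0"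
  unfolding Ph_mk gX_def mk2_mult by (simp add: mk2_eq)

lemma gX_mk: "gX = mk2 0 (- \<i>) (- \<i>) 0" by (simp add: gX_def)

lemma cov_sub_S:
  assumes b: "b \<ge> 1" and V: "V \<in> covariant_maps b a n"
  shows "V \<in> Sset b a n"
proof -
  have supp: "\<forall>i k. n < i \<longrightarrow> V i k = 0" and cv: "\<And>g h. (g, h) \<in> BD_graph b a \<Longrightarrow> cov n g h V"
    using V unfolding covariant_maps_alt by auto
  have cP: "cov n (Ph (pi / real b)) (Ph ((2 * real a - 1) * pi / real b)) V"
    by (rule cv) (rule BD_graph.genP)
  have cXX: "cov n gX gX V"
    by (rule cv) (rule BD_graph.genX)
  have good: "goodi b a n i" if i: "i \<le> n" and nz: "V i 0 \<noteq> 0" for i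
  proof -
    from cP i have "(\<Sum>l\<le>n. Dspin n (Ph (pi / real b)) i l * V l 0) = (\<Sum>m\<in>UNIV. V i m * Ph ((2 * real a - 1) * pi / real b) $ m $ 0)"
      unfolding cov_def by blast
    then have "exp (\<i> * of_real (pi / real b) * of_int (int n - 2 * int i) / 2) * V i 0
        = V i 0 * exp (- \<i> * of_real ((2 * real a - 1) * pi / real b) / 2)"
      unfolding Ph_mk sum_diag[OF i] sum2 exp_pow_combine[OF i] by simp
    then have "exp (\<i> * of_real (pi / real b) * of_int (int n - 2 * int i) / 2)
        = exp (- \<i> * of_real ((2 * real a - 1) * pi / real b) / 2)"
      using nz by (simp add: mult.commute)
    then show ?thesis unfolding goodi_def using expo_inv[of b] b by simp
  qed
  have rel: "V i 1 = cX n * V (n - i) 0" if i: "i \<le> n" for i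
  proof -
    from cXX i have "(\<Sum>l\<le>n. Dspin n gX i l * V l 0) = (\<Sum>m\<in>UNIV. V i m * gX $ m $ 0)"
      unfolding cov_def by blast
    then have "(- \<i>)^(n-i) * (- \<i>)^i * V (n - i) 0 = V i 1 * (- \<i>)"
      unfolding gX_mk sum_anti[OF i] sum2 by simp
    then have "(- \<i>)^n * V (n - i) 0 = V i 1 * (- \<i>)"
      using i by (simp add: power_add[symmetric])
    then have "\<i> * ((- \<i>)^n * V (n - i) 0) = \<i> * (V i 1 * (- \<i>))" by simp
    then show ?thesis unfolding cX_def by (simp add: algebra_simps)
  qed
  show ?thesis unfolding Sset_def using supp good rel by auto
qed



lemma goodi_odd: "goodi b a n i \<Longrightarrow> odd n"
proof -
  assume "goodi b a n i"
  then obtain q where q: "int n - 2 * int i = 4 * int b * q - (2 * int a - 1)" unfolding goodi_def by blast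
  then have "int n = 2 * (int i + 2 * int b * q - int a) + 1" by simp
  then have "odd (int n)" by presburger
  then show "odd n" by simp
qed

lemma pow_regroup: "(c * u)^m * (c * v)^i * (W::complex) = (c^m * c^i) * (v^i * u^m) * W"
  by (simp add: power_mult_distrib ac_simps)

lemma S_cov_diag:
  assumes b: "b \<ge> 1" and V: "V \<in> Sset b a n"
  shows "cov n (Ph (of_int k * pi / real b)) (Ph (of_int k * (2*real a - 1) * pi / real b)) V"
  unfolding cov_def
proof (intro allI impI)
  fix i kk assume i: "i \<le> n"
  let ?E = "exp (\<i> * of_real (of_int k * pi / real b) * of_int (int n - 2 * int i) / 2)"
  have L: "(\<Sum>l\<le>n. Dspin n (Ph (of_int k * pi / real b)) i l * V l kk) = ?E * V i kk"
    unfolding Ph_mk sum_diag[OF i] exp_pow_combine[OF i] ..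
  have c0: "?E * V i 0 = V i 0 * exp (- \<i> * of_real (of_int k * (2*real a - 1) * pi / real b) / 2)"
  proof (cases "V i 0 = 0")
    case False
    then have "goodi b a n i" using V i unfolding Sset_def by auto
    then obtain q where "int n - 2 * int i = 4 * int b * q - (2 * int a - 1)" unfolding goodi_def by blast
    from expo0[OF _ this, of k] b show ?thesis by simp
  qed simp
  have c1: "?E * V i 1 = V i 1 * exp (\<i> * of_real (of_int k * (2*real a - 1) * pi / real b) / 2)"
  proof (cases "V (n - i) 0 = 0")
    case True
    then have "V i 1 = 0" using V i unfolding Sset_def by auto
    then show ?thesis by simp
  next
    case False
    then have "goodi b a n (n - i)" using V i unfolding Sset_def by auto
    then obtain q where "int n - 2 * int (n - i) = 4 * int b * q - (2 * int a - 1)" unfolding goodi_def by blast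
    then have "int n - 2 * int i = (2 * int a - 1) - 4 * int b * q" using i by (simp add: of_nat_diff)
    from expo1[OF _ this, of k] b show ?thesis by simp
  qed
  show "(\<Sum>l\<le>n. Dspin n (Ph (of_int k * pi / real b)) i l * V l kk) =
        (\<Sum>m\<in>UNIV. V i m * Ph (of_int k * (2*real a - 1) * pi / real b) $ m $ kk)"
    unfolding L sum2 using two_cases[of kk] c0 c1 by (auto simp: Ph_mk)
qed

lemma S_cov_anti:
  assumes b: "b \<ge> 1" and V: "V \<in> Sset b a n"
  shows "cov n (Ph (of_int k * pi / real b) ** gX) (Ph (of_int k * (2*real a - 1) * pi / real b) ** gX) V"
  unfolding cov_def
proof (intro allI impI)
  fix i kk assume i: "i \<le> n"
  let ?x = "of_int k * pi / real b"
  let ?y = "of_int k * (2*real a - 1) * pi / real b"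
  let ?E = "exp (\<i> * of_real ?x * of_int (int n - 2 * int i) / 2)"
  have L: "(\<Sum>l\<le>n. Dspin n (Ph ?x ** gX) i l * V l kk) = (- \<i>)^n * ?E * V (n - i) kk"
  proof -
    have "(\<Sum>l\<le>n. Dspin n (Ph ?x ** gX) i l * V l kk) =
       (- \<i> * exp (\<i> * of_real ?x / 2))^(n-i) * (- \<i> * exp (- \<i> * of_real ?x / 2))^i * V (n - i) kk"
      unfolding Ph_gX sum_anti[OF i] ..
    also have "\<dots> = ((- \<i>)^(n-i) * (- \<i>)^i) * (exp (- \<i> * of_real ?x / 2) ^ i * exp (\<i> * of_real ?x / 2) ^ (n - i)) * V (n - i) kk"
      by (rule pow_regroup)
    also have "\<dots> = (- \<i>)^n * ?E * V (n - i) kk"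
      unfolding exp_pow_combine[OF i] using i by (simp add: power_add[symmetric])
    finally show ?thesis .
  qed
  have Vn: "V (n - i) 1 = cX n * V i 0"
    using V i unfolding Sset_def by (auto dest: spec[of _ "n - i"])
  have c0: "(- \<i>)^n * ?E * V (n - i) 0 = V i 1 * (- \<i> * exp (\<i> * of_real ?y / 2))"
  proof (cases "V (n - i) 0 = 0")
    case True
    then have "V i 1 = 0" using V i unfolding Sset_def by auto
    then show ?thesis using True by simp
  next
    case False
    then have "goodi b a n (n - i)" using V i unfolding Sset_def by auto
    then obtain q where "int n - 2 * int (n - i) = 4 * int b * q - (2 * int a - 1)" unfolding goodi_def by blast
    then have "int n - 2 * int i = (2 * int a - 1) - 4 * int b * q" using i by (simp add: of_nat_diff)
    from expo1[OF _ this, of k] b have E: "?E = exp (\<i> * of_real ?y / 2)" by simp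
    have "V i 1 = cX n * V (n - i) 0" using V i unfolding Sset_def by auto
    then show ?thesis unfolding E cX_def by (simp add: algebra_simps)
  qed
  have c1: "(- \<i>)^n * ?E * V (n - i) 1 = V i 0 * (- \<i> * exp (- \<i> * of_real ?y / 2))"
  proof (cases "V i 0 = 0")
    case True
    then show ?thesis unfolding Vn by simp
  next
    case False
    then have g: "goodi b a n i" using V i unfolding Sset_def by auto
    then obtain q where "int n - 2 * int i = 4 * int b * q - (2 * int a - 1)" unfolding goodi_def by blast
    from expo0[OF _ this, of k] b have E: "?E = exp (- \<i> * of_real ?y / 2)" by simp
    have "odd n" using goodi_odd[OF g] .
    then have m1: "(- \<i>)^n * (- \<i>)^n = (-1 :: complex)"
      by (simp add: power_mult_distrib[symmetric])
    have "(- \<i>)^n * ?E * V (n - i) 1 = ((- \<i>)^n * (- \<i>)^n) * \<i> * exp (- \<i> * of_real ?y / 2) * V i 0"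
      unfolding Vn E cX_def by (simp add: ac_simps)
    also have "\<dots> = V i 0 * (- \<i> * exp (- \<i> * of_real ?y / 2))"
      unfolding m1 by simp
    finally show ?thesis .
  qed
  show "(\<Sum>l\<le>n. Dspin n (Ph ?x ** gX) i l * V l kk) =
        (\<Sum>m\<in>UNIV. V i m * (Ph ?y ** gX) $ m $ kk)"
    unfolding L unfolding sum2 Ph_gX using two_cases[of kk] c0 c1 by auto
qed

lemma cov_eq_S:
  assumes b: "b \<ge> 1" and a: "a \<ge> 1"
  shows "covariant_maps b a n = Sset b a n"
proof
  show "covariant_maps b a n \<subseteq> Sset b a n" using cov_sub_S[OF b] by blast
next
  show "Sset b a n \<subseteq> covariant_maps b a n"
  proof
    fix V assume V: "V \<in> Sset b a n"
    have "cov n g h V" if gh: "(g, h) \<in> BD_graph b a" for g h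
    proof -
      have "(g, h) \<in> Gs b a" by (rule BD_sub_Gs[OF b a gh])
      then show ?thesis unfolding Gs_def using S_cov_diag[OF b V] S_cov_anti[OF b V] by auto
    qed
    moreover have "\<forall>i k. n < i \<longrightarrow> V i k = 0" using V unfolding Sset_def by auto
    ultimately show "V \<in> covariant_maps b a n" unfolding covariant_maps_alt by auto
  qed
qed



lemma sum_app: "(\<Sum>w\<in>A. (f w :: 'a \<Rightarrow> 'b::comm_monoid_add)) x = (\<Sum>w\<in>A. f w x)"
  by (induction A rule: infinite_finite_induct) auto

interpretation vs: vector_space fscale
  by unfold_locales (simp_all add: fscale_def fun_eq_iff algebra_simps)

definition Wset :: "nat \<Rightarrow> nat \<Rightarrow> nat \<Rightarrow> nat set" where
  "Wset b a n = {i. i \<le> n \<and> goodi b a n i}"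

definition Bw :: "nat \<Rightarrow> nat \<Rightarrow> nat \<Rightarrow> 2 \<Rightarrow> complex" where
  "Bw n w = (\<lambda>i kk. if kk = 0 then (if i = w then 1 else 0) else (if i = n - w then cX n else 0))"

lemma Bw_inj: "inj_on (Bw n) (Wset b a n)"
proof (rule inj_onI)
  fix x y assume "Bw n x = Bw n y"
  then have "Bw n x x 0 = Bw n y x 0" by simp
  then show "x = y" unfolding Bw_def by (auto split: if_splits)
qed

lemma finite_W: "finite (Wset b a n)" unfolding Wset_def by auto

lemma dim_S: "vs.dim (Sset b a n) = card (Wset b a n)"
proof -
  let ?B = "Bw n ` Wset b a n"
  have sub: "?B \<subseteq> Sset b a n"
  proof
    fix V assume "V \<in> ?B"
    then obtain w where w: "w \<in> Wset b a n" and V: "V = Bw n w" by blast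
    then have wn: "w \<le> n" and gw: "goodi b a n w" unfolding Wset_def by auto
    have "\<forall>i k. n < i \<longrightarrow> V i k = 0" unfolding V Bw_def using wn by auto
    moreover have "\<forall>i\<le>n. V i 0 \<noteq> 0 \<longrightarrow> goodi b a n i" unfolding V Bw_def using gw by auto
    moreover have "\<forall>i\<le>n. V i 1 = cX n * V (n - i) 0" unfolding V Bw_def using wn by auto
    ultimately show "V \<in> Sset b a n" unfolding Sset_def by blast
  qed
  have span: "Sset b a n \<subseteq> vs.span ?B"
  proof
    fix V assume V: "V \<in> Sset b a n"
    have eq: "V = (\<Sum>w\<in>Wset b a n. fscale (V w 0) (Bw n w))"
    proof (intro ext)
      fix i kk
      have "(\<Sum>w\<in>Wset b a n. fscale (V w 0) (Bw n w)) i kk = (\<Sum>w\<in>Wset b a n. V w 0 * Bw n w i kk)"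
        by (simp add: sum_app fscale_def)
      also have "\<dots> = V i kk"
      proof (cases "kk = 0")
        case True
        have "(\<Sum>w\<in>Wset b a n. V w 0 * Bw n w i kk) = (\<Sum>w\<in>Wset b a n. if w = i then V i 0 else 0)"
          unfolding Bw_def True by (intro sum.cong) auto
        also have "\<dots> = V i kk"
        proof (cases "i \<in> Wset b a n")
          case False
          then have z: "V i 0 = 0" using V unfolding Sset_def Wset_def by (cases "i \<le> n") auto
          have "(\<Sum>w\<in>Wset b a n. if w = i then V i 0 else 0) = 0"
            by (rule sum.neutral) (use z in auto)
          then show ?thesis using z True by simp
        qed (use True finite_W in auto)
        finally show ?thesis .
      next
        case False
        then have kk: "kk = 1" using two_cases by blast
        show ?thesis
        proof (cases "i \<le> n")
          case True
          have "(\<Sum>w\<in>Wset b a n. V w 0 * Bw n w i kk) = (\<Sum>w\<in>Wset b a n. if w = n - i then cX n * V (n - i) 0 else 0)"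
            unfolding Bw_def kk using True by (intro sum.cong) (auto simp: Wset_def)
          also have "\<dots> = cX n * V (n - i) 0"
          proof (cases "n - i \<in> Wset b a n")
            case False
            then have z: "V (n - i) 0 = 0" using V unfolding Sset_def Wset_def
              by (metis (mono_tags, lifting) diff_le_self mem_Collect_eq)
            have "(\<Sum>w\<in>Wset b a n. if w = n - i then cX n * V (n - i) 0 else 0) = 0"
              by (rule sum.neutral) (use z in auto)
            then show ?thesis using z by simp
          qed (use finite_W in auto)
          also have "\<dots> = V i kk" using V True kk unfolding Sset_def by auto
          finally show ?thesis .
        next
          case False
          have "(\<Sum>w\<in>Wset b a n. V w 0 * Bw n w i kk) = 0"
            unfolding Bw_def kk using False by (intro sum.neutral) auto
          also have "\<dots> = V i kk" using V False unfolding Sset_def by auto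
          finally show ?thesis .
        qed
      qed
      finally show "V i kk = (\<Sum>w\<in>Wset b a n. fscale (V w 0) (Bw n w)) i kk" ..
    qed
    have "(\<Sum>w\<in>Wset b a n. fscale (V w 0) (Bw n w)) \<in> vs.span ?B"
      by (intro vs.span_sum vs.span_scale vs.span_base) auto
    then show "V \<in> vs.span ?B" using eq by simp
  qed
  have ind: "vs.independent ?B"
  proof (rule vs.independent_if_scalars_zero)
    show "finite ?B" using finite_W by auto
  next
    fix f x assume s: "(\<Sum>x\<in>?B. fscale (f x) x) = 0" and x: "x \<in> ?B"
    then obtain w where w: "w \<in> Wset b a n" and xw: "x = Bw n w" by blast
    have "(\<Sum>x\<in>?B. fscale (f x) x) = (\<Sum>v\<in>Wset b a n. fscale (f (Bw n v)) (Bw n v))"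
      by (rule sum.reindex_cong[OF Bw_inj refl]) simp
    then have "(\<Sum>v\<in>Wset b a n. fscale (f (Bw n v)) (Bw n v)) w 0 = 0" using s by simp
    then have "(\<Sum>v\<in>Wset b a n. f (Bw n v) * Bw n v w 0) = 0" by (simp add: sum_app fscale_def)
    moreover have "(\<Sum>v\<in>Wset b a n. f (Bw n v) * Bw n v w 0) = (\<Sum>v\<in>Wset b a n. if v = w then f (Bw n w) else 0)"
      unfolding Bw_def by (intro sum.cong) auto
    moreover have "\<dots> = f (Bw n w)" using w finite_W by simp
    ultimately show "f x = 0" using xw by simp
  qed
  have "card ?B = vs.dim (Sset b a n)" by (rule vs.basis_card_eq_dim[OF sub span ind])
  moreover have "card ?B = card (Wset b a n)" by (rule card_image[OF Bw_inj])
  ultimately show ?thesis by simp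
qed

lemma mult_card:
  assumes "b \<ge> 1" "a \<ge> 1"
  shows "multiplicity b a n = card (Wset b a n)"
  unfolding multiplicity_def cov_eq_S[OF assms] using dim_S by simp



lemma le_div_iff_int: "0 < (d::int) \<Longrightarrow> (q \<le> x div d) \<longleftrightarrow> d * q \<le> x"
proof
  assume d: "0 < d" and q: "q \<le> x div d"
  have "d * q \<le> d * (x div d)" using q d by simp
  also have "\<dots> \<le> x" using d by (metis div_mult_mod_eq le_add_same_cancel1 mult.commute pos_mod_sign)
  finally show "d * q \<le> x" .
next
  assume d: "0 < d" and q: "d * q \<le> x"
  show "q \<le> x div d"
  proof (rule ccontr)
    assume "\<not> q \<le> x div d"
    then have "x div d + 1 \<le> q" by simp
    then have "d * (x div d + 1) \<le> d * q" using d by simp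
    moreover have "x < d * (x div d + 1)" using d
      by (metis add.commute div_mult_mod_eq distrib_left mult.commute mult.right_neutral pos_mod_bound add_less_cancel_left)
    ultimately show False using q by simp
  qed
qed

lemma card_W_odd:
  assumes b: "b \<ge> 1" and n: "odd n"
  shows "card (Wset b a n) = nat ((int n + (2 * int a - 1)) div (4 * int b) + (int n - (2 * int a - 1)) div (4 * int b) + 1)"
proof -
  define r where "r = 2 * int a - 1"
  define d where "d = 4 * int b"
  have d0: "0 < d" using b unfolding d_def by simp
  define lo where "lo = - ((int n - r) div d)"
  define hi where "hi = (int n + r) div d"
  define f where "f i = (int n - 2 * int i + r) div d" for i
  define g where "g q = nat ((int n + r - d * q) div 2)" for q
  have W: "i \<in> Wset b a n \<longleftrightarrow> i \<le> n \<and> (\<exists>q. int n - 2 * int i = d * q - r)" for i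
    unfolding Wset_def goodi_def r_def d_def by (simp add: mult.assoc)
  have bij: "bij_betw f (Wset b a n) {lo..hi}"
  proof (rule bij_betw_byWitness[where f' = g])
    show "\<forall>i\<in>Wset b a n. g (f i) = i"
    proof
      fix i assume "i \<in> Wset b a n"
      then obtain q where q: "int n - 2 * int i = d * q - r" using W by blast
      have "f i = q" unfolding f_def using q d0 by (intro int_div_pos_eq[where r = 0]) auto
      then show "g (f i) = i" unfolding g_def using q by simp
    qed
    show "\<forall>q\<in>{lo..hi}. f (g q) = q"
    proof
      fix q assume "q \<in> {lo..hi}"
      then have q1: "d * q \<le> int n + r" and q2: "d * (- q) \<le> int n - r"
        unfolding lo_def hi_def using le_div_iff_int[OF d0] by (auto simp: minus_le_iff[symmetric])
      have ev: "even (int n + r - d * q)" using n unfolding r_def d_def by simp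
      then have x: "int n + r - d * q = 2 * ((int n + r - d * q) div 2)" by simp
      have "int (g q) = (int n + r - d * q) div 2" unfolding g_def using q1 by simp
      then have "int n - 2 * int (g q) + r = d * q" using x by linarith
      then show "f (g q) = q" unfolding f_def using d0 by (intro int_div_pos_eq[where r = 0]) auto
    qed
    show "f ` Wset b a n \<subseteq> {lo..hi}"
    proof
      fix y assume "y \<in> f ` Wset b a n"
      then obtain i where i: "i \<in> Wset b a n" and y: "y = f i" by blast
      then obtain q where q: "int n - 2 * int i = d * q - r" and iN: "i \<le> n" using W by blast
      have "f i = q" unfolding f_def using q d0 by (intro int_div_pos_eq[where r = 0]) auto
      moreover have "d * q \<le> int n + r" using q by simp
      moreover have "d * (- q) \<le> int n - r" using q iN by simp
      ultimately show "y \<in> {lo..hi}" unfolding y lo_def hi_def using le_div_iff_int[OF d0]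
        by (auto simp: minus_le_iff[symmetric])
    qed
    show "g ` {lo..hi} \<subseteq> Wset b a n"
    proof
      fix y assume "y \<in> g ` {lo..hi}"
      then obtain q where "q \<in> {lo..hi}" and y: "y = g q" by blast
      then have q1: "d * q \<le> int n + r" and q2: "d * (- q) \<le> int n - r"
        unfolding lo_def hi_def using le_div_iff_int[OF d0] by (auto simp: minus_le_iff[symmetric])
      have ev: "even (int n + r - d * q)" using n unfolding r_def d_def by simp
      then have x: "int n + r - d * q = 2 * ((int n + r - d * q) div 2)" by simp
      have gq: "int (g q) = (int n + r - d * q) div 2" unfolding g_def using q1 by simp
      then have "int n - 2 * int (g q) = d * q - r" using x by linarith
      moreover have "g q \<le> n" using gq x q2 by linarith
      ultimately show "y \<in> Wset b a n" unfolding y using W by blast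
    qed
  qed
  have "card (Wset b a n) = card {lo..hi}" using bij_betw_same_card[OF bij] .
  also have "\<dots> = nat (hi - lo + 1)" by simp
  finally show ?thesis unfolding hi_def lo_def r_def d_def by simp
qed

lemma card_W_even: "even n \<Longrightarrow> card (Wset b a n) = 0"
  unfolding Wset_def using goodi_odd by auto



theorem lemma2:
  fixes b a \<mu> :: nat
  assumes "1 \<le> b" and "1 \<le> a" and "a \<le> b" and "1 \<le> \<mu>"
  defines "s \<equiv> (2 * real a - 1) / 2"
  defines "\<kappa> \<equiv> (if odd \<mu> then s - real b else - s)"
  shows "\<exists>n. real n / 2 = real \<mu> * real b + \<kappa> \<and> multiplicity b a n = \<mu> \<and>
           (\<forall>m. multiplicity b a m = \<mu> \<longrightarrow> n \<le> m)"
proof -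
  note b = assms(1) and a = assms(2) and ab = assms(3) and mu = assms(4)
  define r where "r = 2 * int a - 1"
  define d where "d = 4 * int b"
  define F where "F x = (x + r) div d + (x - r) div d + 1" for x
  have d0: "0 < d" using b unfolding d_def by simp
  have r1: "1 \<le> r" and r2: "2 * r + 2 \<le> d" using a ab unfolding r_def d_def by simp_all
  have mult_F: "multiplicity b a m = (if odd m then nat (F (int m)) else 0)" for m
    using mult_card[OF b a] card_W_odd[OF b] card_W_even unfolding F_def r_def d_def by auto
  have Fmono: "x \<le> y \<Longrightarrow> F x \<le> F y" for x y
    unfolding F_def by (intro add_mono zdiv_mono1 order_refl) (use d0 in auto)
  obtain N :: nat where Nreal: "real N / 2 = real \<mu> * real b + \<kappa>" and Nodd: "odd N"
    and FN: "F (int N) = int \<mu>" and FN1: "F (int N - 1) = int \<mu> - 1"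
  proof (cases "odd \<mu>")
    case True
    then obtain t where t: "\<mu> = 2 * t + 1" using oddE by blast
    define N where "N = 4 * b * t + 2 * a - 1"
    have iN: "int N = d * int t + r" unfolding N_def d_def r_def using a by (simp add: of_nat_diff)
    have "real N / 2 = real \<mu> * real b + \<kappa>"
      unfolding \<kappa>_def s_def using True t a by (simp add: N_def of_nat_diff field_simps)
    moreover have "odd N" unfolding N_def using a by simp
    moreover have "F (int N) = int \<mu>"
    proof -
      have "(int N + r) div d = int t" using r1 r2 by (intro int_div_pos_eq[where r = "2 * r"]) (auto simp: iN)
      moreover have "(int N - r) div d = int t" using d0 by (intro int_div_pos_eq[where r = 0]) (auto simp: iN)
      ultimately show ?thesis unfolding F_def t by simp
    qed
    moreover have "F (int N - 1) = int \<mu> - 1"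
    proof -
      have "(int N - 1 + r) div d = int t" using r1 r2 by (intro int_div_pos_eq[where r = "2 * r - 1"]) (auto simp: iN)
      moreover have "(int N - 1 - r) div d = int t - 1" using d0 by (intro int_div_pos_eq[where r = "d - 1"]) (auto simp: iN algebra_simps)
      ultimately show ?thesis unfolding F_def t by simp
    qed
    ultimately show ?thesis using that by blast
  next
    case False
    then obtain k where k: "\<mu> = 2 * k" by (auto elim: evenE)
    define t where "t = k - 1"
    have t: "\<mu> = 2 * t + 2" using mu k unfolding t_def by simp
    define N where "N = 4 * b * (t + 1) - (2 * a - 1)"
    have le: "2 * a - 1 \<le> 4 * b * (t + 1)" using ab by simp
    have iN: "int N = d * (int t + 1) - r" unfolding N_def d_def r_def using a le by (simp add: of_nat_diff algebra_simps)
    have "real N / 2 = real \<mu> * real b + \<kappa>"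
      unfolding \<kappa>_def s_def using False t a le by (simp add: N_def of_nat_diff field_simps)
    moreover have "odd N"
    proof -
      have "odd (int N)" unfolding iN r_def d_def by simp
      then show ?thesis by simp
    qed
    moreover have "F (int N) = int \<mu>"
    proof -
      have "(int N + r) div d = int t + 1" using d0 by (intro int_div_pos_eq[where r = 0]) (auto simp: iN)
      moreover have "(int N - r) div d = int t" using r1 r2 by (intro int_div_pos_eq[where r = "d - 2 * r"]) (auto simp: iN algebra_simps)
      ultimately show ?thesis unfolding F_def t by simp
    qed
    moreover have "F (int N - 1) = int \<mu> - 1"
    proof -
      have "(int N - 1 + r) div d = int t" using d0 by (intro int_div_pos_eq[where r = "d - 1"]) (auto simp: iN algebra_simps)
      moreover have "(int N - 1 - r) div d = int t" using r1 r2 by (intro int_div_pos_eq[where r = "d - 2 * r - 1"]) (auto simp: iN algebra_simps)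
      ultimately show ?thesis unfolding F_def t by simp
    qed
    ultimately show ?thesis using that by blast
  qed
  have "multiplicity b a N = \<mu>" using mult_F[of N] Nodd FN by simp
  moreover have "N \<le> m" if m: "multiplicity b a m = \<mu>" for m
  proof (rule ccontr)
    assume "\<not> N \<le> m"
    then have "int m \<le> int N - 1" by simp
    then have "F (int m) \<le> int \<mu> - 1" using Fmono FN1 by metis
    moreover have "odd m" using m mu mult_F[of m] by (cases "odd m") auto
    ultimately have "multiplicity b a m < \<mu>" using mult_F[of m] mu by simp
    then show False using m by simp
  qed
  ultimately show ?thesis using Nreal by blast
qed

end
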